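(* Every maximal $k$-ideal of the semiring $V\mathbb{B}(\mathbf{t})^\circ=\{x\in V\mathbb{B}(\mathbf{t}):x\le1\}$ is of the form \[ \mathfrak{m}^\dagger_<=\Big\{\tfrac ab\in V\mathbb{B}(\mathbf{t})^\circ : \min{}_<(b)\notin a\Big\} \] for some monomial order $<$ on $\mathbb{N}^m$ (here $a,b\in V\mathbb{B}[\mathbf{t}]$ are viewed as finite subsets of $\mathbb{N}^m$, and the condition "$\min_<(b)\notin a$" is what the paper writes as $a_{\min_<(b)}=0$).
   Context: $V\mathbb{B}[\mathbf{t}]$ ($\mathbf{t}=(t_1,\dots,t_m)$) is the idempotent semiring of subsets of $\mathbb{N}^m$ equal to the vertex set of their Newton polyhedron $\operatorname{conv}(\cdot)+\mathbb{R}^m_{\ge0}$, with $a\oplus b$ = vertices of the Newton polyhedron of $a\cup b$, $a\odot b$ = vertices of that of $a+b$, $0=\emptyset$, $1=\{0\}$. $V\mathbb{B}(\mathbf{t})$ is its fraction semifield, ordered by $x\le y$ iff $x\oplus y=y$. An ideal of a semiring contains $0$ and is closed under addition and multiplication by semiring elements; it is a $k$-ideal if $a+b\in I$, $a\in I$ imply $b\in I$. A monomial order on $\mathbb{N}^m$ is a total order $<$ with $0<a$ for $a\ne0$ and $a<b\Rightarrow a+c<b+c$. *)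

theory Defs
  imports "HOL-Analysis.Analysis"
begin

text \<open>Exponent vectors in N^m, with m = CARD('n) the number of variables.\<close>
type_synonym 'n pt = "'n \<Rightarrow> nat"

definition emb :: "'n::finite pt \<Rightarrow> real ^ 'n" where
  "emb p = (\<chi> i. real (p i))"

definition padd :: "'n pt \<Rightarrow> 'n pt \<Rightarrow> 'n pt" where
  "padd p q = (\<lambda>i. p i + q i)"

definition newt :: "'n::finite pt set \<Rightarrow> (real ^ 'n) set" where
  "newt S = {x + r | x r. x \<in> convex hull (emb ` S) \<and> (\<forall>i. 0 \<le> r $ i)}"

definition vert :: "'n::finite pt set \<Rightarrow> 'n pt set" where
  "vert S = {p. emb p extreme_point_of newt S}"

definition VB :: "'n::finite pt set set" where
  "VB = {S. finite S \<and> vert S = S}"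

definition vplus :: "'n::finite pt set \<Rightarrow> 'n pt set \<Rightarrow> 'n pt set" where
  "vplus a b = vert (a \<union> b)"

definition vtimes :: "'n::finite pt set \<Rightarrow> 'n pt set \<Rightarrow> 'n pt set" where
  "vtimes a b = vert {padd x y | x y. x \<in> a \<and> y \<in> b}"

definition vone :: "'n pt set" where
  "vone = {(\<lambda>i. 0)}"

definition Fdom :: "('n::finite pt set \<times> 'n pt set) set" where
  "Fdom = {(a, b). a \<in> VB \<and> b \<in> VB \<and> b \<noteq> {}}"

definition frel :: "(('n::finite pt set \<times> 'n pt set) \<times> ('n pt set \<times> 'n pt set)) set" where
  "frel = {((a, b), (c, d)). (a, b) \<in> Fdom \<and> (c, d) \<in> Fdom \<and> vtimes a d = vtimes c b}"

definition VBfrac :: "('n::finite pt set \<times> 'n pt set) set set" where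
  "VBfrac = Fdom // frel"

definition fcls :: "'n::finite pt set \<Rightarrow> 'n pt set \<Rightarrow> ('n pt set \<times> 'n pt set) set" where
  "fcls a b = frel `` {(a, b)}"

definition fplus :: "('n::finite pt set \<times> 'n pt set) set \<Rightarrow> ('n pt set \<times> 'n pt set) set
    \<Rightarrow> ('n pt set \<times> 'n pt set) set" where
  "fplus X Y = (let p = (SOME p. p \<in> X); q = (SOME q. q \<in> Y) in
     fcls (vplus (vtimes (fst p) (snd q)) (vtimes (fst q) (snd p))) (vtimes (snd p) (snd q)))"

definition fmult :: "('n::finite pt set \<times> 'n pt set) set \<Rightarrow> ('n pt set \<times> 'n pt set) set
    \<Rightarrow> ('n pt set \<times> 'n pt set) set" where
  "fmult X Y = (let p = (SOME p. p \<in> X); q = (SOME q. q \<in> Y) in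
     fcls (vtimes (fst p) (fst q)) (vtimes (snd p) (snd q)))"

definition fzero :: "('n::finite pt set \<times> 'n pt set) set" where
  "fzero = fcls {} vone"

definition fone :: "('n::finite pt set \<times> 'n pt set) set" where
  "fone = fcls vone vone"

definition fle :: "('n::finite pt set \<times> 'n pt set) set \<Rightarrow> ('n pt set \<times> 'n pt set) set \<Rightarrow> bool" where
  "fle X Y \<longleftrightarrow> fplus X Y = Y"

definition Circ :: "('n::finite pt set \<times> 'n pt set) set set" where
  "Circ = {X \<in> VBfrac. fle X fone}"

definition circ_ideal :: "('n::finite pt set \<times> 'n pt set) set set \<Rightarrow> bool" where
  "circ_ideal I \<longleftrightarrow> I \<subseteq> Circ \<and> fzero \<in> I
     \<and> (\<forall>x\<in>I. \<forall>y\<in>I. fplus x y \<in> I)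
     \<and> (\<forall>r\<in>Circ. \<forall>x\<in>I. fmult r x \<in> I \<and> fmult x r \<in> I)"

definition circ_k_ideal :: "('n::finite pt set \<times> 'n pt set) set set \<Rightarrow> bool" where
  "circ_k_ideal I \<longleftrightarrow> circ_ideal I
     \<and> (\<forall>a\<in>I. \<forall>b\<in>Circ. fplus a b \<in> I \<longrightarrow> b \<in> I)"

definition maximal_circ_k_ideal :: "('n::finite pt set \<times> 'n pt set) set set \<Rightarrow> bool" where
  "maximal_circ_k_ideal I \<longleftrightarrow> circ_k_ideal I \<and> I \<noteq> Circ
     \<and> (\<forall>J. circ_k_ideal J \<and> J \<noteq> Circ \<and> I \<subseteq> J \<longrightarrow> J = I)"

definition monomial_order :: "('n pt \<Rightarrow> 'n pt \<Rightarrow> bool) \<Rightarrow> bool" where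
  "monomial_order lt \<longleftrightarrow>
     (\<forall>a. \<not> lt a a) \<and> (\<forall>a b c. lt a b \<longrightarrow> lt b c \<longrightarrow> lt a c)
     \<and> (\<forall>a b. a \<noteq> b \<longrightarrow> lt a b \<or> lt b a)
     \<and> (\<forall>a. a \<noteq> (\<lambda>i. 0) \<longrightarrow> lt (\<lambda>i. 0) a)
     \<and> (\<forall>a b c. lt a b \<longrightarrow> lt (padd a c) (padd b c))"

definition min_ord :: "('n pt \<Rightarrow> 'n pt \<Rightarrow> bool) \<Rightarrow> 'n pt set \<Rightarrow> 'n pt" where
  "min_ord lt b = (THE x. x \<in> b \<and> (\<forall>y\<in>b. y \<noteq> x \<longrightarrow> lt x y))"

definition m_dagger :: "('n::finite pt \<Rightarrow> 'n pt \<Rightarrow> bool) \<Rightarrow> ('n pt set \<times> 'n pt set) set set" where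
  "m_dagger lt = {X \<in> Circ. \<exists>a b. (a, b) \<in> X \<and> min_ord lt b \<notin> a}"

end

theory Submission
  imports Defs
begin


definition pos :: "real^'n \<Rightarrow> bool" where "pos u \<longleftrightarrow> (\<forall>i. 0 \<le> u$i)"
definition H :: "'n::finite pt set \<Rightarrow> real^'n \<Rightarrow> real" where
  "H S u = Min ((\<lambda>p. inner u (emb p)) ` S)"

lemma inner_pos: "pos u \<Longrightarrow> pos r \<Longrightarrow> 0 \<le> inner u (r::real^'n)"
  unfolding pos_def inner_vec_def by (auto intro!: sum_nonneg)

lemma pos_emb: "pos (emb p)" by (simp add: pos_def emb_def)

lemma newt_alt: "newt S = (\<Union>r\<in>Collect pos. \<Union>x\<in>convex hull (emb ` S). {r + x})"
  unfolding newt_def pos_def by (auto simp: add.commute) (metis add.commute)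

lemma closed_orth: "closed (Collect pos :: (real^'n) set)"
proof -
  have "Collect pos = (\<Inter>i. {x::real^'n. 0 \<le> x$i})" by (auto simp: pos_def)
  moreover have "closed {x::real^'n. 0 \<le> x$i}" for i
  proof -
    have "{x::real^'n. 0 \<le> x$i} = {x. inner (axis i 1) x \<ge> 0}" by (simp add: inner_axis')
    then show ?thesis by (simp add: closed_halfspace_ge)
  qed
  ultimately show ?thesis by auto
qed

lemma convex_orth: "convex (Collect pos :: (real^'n) set)"
  unfolding convex_def pos_def by (auto intro!: add_nonneg_nonneg mult_nonneg_nonneg)

lemma newt_closed: "finite S \<Longrightarrow> closed (newt S)"
  unfolding newt_alt by (intro closed_compact_sums closed_orth finite_imp_compact_convex_hull) auto

lemma newt_convex: "convex (newt S)"
  unfolding newt_alt by (intro convex_sums convex_orth convex_convex_hull)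

lemma H_le: "finite S \<Longrightarrow> p \<in> S \<Longrightarrow> H S u \<le> inner u (emb p)"
  unfolding H_def by auto

lemma H_attained: "finite S \<Longrightarrow> S \<noteq> {} \<Longrightarrow> \<exists>p\<in>S. H S u = inner u (emb p)"
proof -
  assume a: "finite S" "S \<noteq> {}"
  have "Min ((\<lambda>p. inner u (emb p)) ` S) \<in> (\<lambda>p. inner u (emb p)) ` S"
    using a by (intro Min_in) auto
  then show ?thesis unfolding H_def by auto
qed

lemma G1a: assumes "finite S" "x \<in> newt S" "pos u" shows "H S u \<le> inner u x"
proof -
  obtain c r where x: "x = c + r" and c: "c \<in> convex hull (emb ` S)" and r: "pos r"
    using assms(2) unfolding newt_def pos_def by auto
  have "convex hull (emb ` S) \<subseteq> {y. inner u y \<ge> H S u}"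
    by (rule hull_minimal) (auto simp: convex_halfspace_ge H_le assms(1))
  with c have "H S u \<le> inner u c" by auto
  moreover have "0 \<le> inner u r" using inner_pos assms(3) r by blast
  ultimately show ?thesis by (simp add: x inner_add_right)
qed

lemma emb_in_newt: "p \<in> S \<Longrightarrow> emb p \<in> newt S"
  unfolding newt_def by (rule CollectI, rule exI[of _ "emb p"], rule exI[of _ 0]) (auto intro: hull_inc)

lemma G1b: assumes "finite S" "S \<noteq> {}" "\<And>u. pos u \<Longrightarrow> H S u \<le> inner u x" shows "x \<in> newt S"
proof (rule ccontr)
  assume "x \<notin> newt S"
  then obtain a b where ab: "inner a x < b" "\<And>y. y \<in> newt S \<Longrightarrow> b < inner a y"
    using separating_hyperplane_closed_point[OF newt_convex newt_closed[OF assms(1)]] by blast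
  obtain s where s: "s \<in> S" using assms(2) by auto
  have "pos a"
    unfolding pos_def
  proof
    fix i show "0 \<le> a$i"
    proof (rule ccontr)
      assume neg: "\<not> 0 \<le> a$i"
      define t where "t = (inner a (emb s) - b + 1) / (- a$i)"
      have tpos: "t \<ge> 0"
      proof -
        have "b < inner a (emb s)" using ab(2) emb_in_newt[OF s] by auto
        then show ?thesis using neg unfolding t_def by (intro divide_nonneg_pos) auto
      qed
      have "emb s + axis i t \<in> newt S"
        unfolding newt_def
        apply (rule CollectI, rule exI[of _ "emb s"], rule exI[of _ "axis i t"])
        using tpos s by (auto intro: hull_inc simp: axis_def)
      then have "b < inner a (emb s + axis i t)" by (rule ab(2))
      also have "\<dots> = inner a (emb s) + a$i * t" by (simp add: inner_add_right inner_axis)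
      also have "a$i * t = - (inner a (emb s) - b + 1)" using neg unfolding t_def by auto
      finally show False by simp
    qed
  qed
  from assms(3)[OF this] have "H S a \<le> inner a x" .
  moreover obtain p where "p \<in> S" "H S a = inner a (emb p)" using H_attained assms(1,2) by blast
  moreover have "b < inner a (emb p)" using ab(2) emb_in_newt[OF \<open>p \<in> S\<close>] by auto
  ultimately show False using ab(1) by simp
qed

lemma G1: "finite S \<Longrightarrow> S \<noteq> {} \<Longrightarrow> x \<in> newt S \<longleftrightarrow> (\<forall>u. pos u \<longrightarrow> H S u \<le> inner u x)"
  using G1a G1b by blast

lemma emb_inj: "emb p = emb q \<Longrightarrow> p = q"
  unfolding emb_def by (auto simp: vec_eq_iff fun_eq_iff)

lemma hull_sub_newt: "convex hull (emb ` S) \<subseteq> newt S"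
proof
  fix x assume "x \<in> convex hull (emb ` S)"
  then show "x \<in> newt S" unfolding newt_def
    by (intro CollectI exI[of _ x] exI[of _ 0]) auto
qed

lemma newt_empty[simp]: "newt {} = {}"
  unfolding newt_def by auto

lemma newt_ne: "S \<noteq> {} \<Longrightarrow> newt S \<noteq> {}"
  using emb_in_newt by blast

lemma G0: assumes "emb p extreme_point_of newt S" shows "p \<in> S"
proof -
  have pin: "emb p \<in> newt S" using assms by (simp add: extreme_point_of_def)
  then obtain c r where x: "emb p = c + r" and c: "c \<in> convex hull (emb ` S)" and r: "\<forall>i. 0 \<le> r$i"
    unfolding newt_def by auto
  have "r = 0"
  proof (rule ccontr)
    assume "r \<noteq> 0"
    have "c \<in> newt S" using c hull_sub_newt by blast
    moreover have "c + 2 *\<^sub>R r \<in> newt S" unfolding newt_def using c r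
      by (intro CollectI exI[of _ c] exI[of _ "2 *\<^sub>R r"]) auto
    moreover have "emb p = midpoint c (c + 2 *\<^sub>R r)" unfolding x midpoint_def
      by (simp add: scaleR_add_right)
    moreover have "c \<noteq> c + 2 *\<^sub>R r" using \<open>r \<noteq> 0\<close> by simp
    ultimately show False using assms unfolding extreme_point_of_def
      by (metis midpoint_in_open_segment)
  qed
  then have "emb p \<in> convex hull (emb ` S)" using x c by simp
  then have "emb p extreme_point_of convex hull (emb ` S)"
    using assms hull_sub_newt unfolding extreme_point_of_def by blast
  then have "emb p \<in> emb ` S" by (rule extreme_point_of_convex_hull)
  then show ?thesis using emb_inj by blast
qed

lemma vert_sub: "vert S \<subseteq> S"
  unfolding vert_def using G0 by blast

lemma H_insert: "finite T \<Longrightarrow> T \<noteq> {} \<Longrightarrow> H (insert p T) u = min (inner u (emb p)) (H T u)"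
  unfolding H_def by (simp add: Min_insert)

lemma decomp:
  assumes fin: "finite S" and p: "p \<in> S" and u: "pos u"
    and sep: "S - {p} \<noteq> {} \<Longrightarrow> inner u (emb p) < H (S - {p}) u"
    and y: "y \<in> newt S"
  shows "inner u (emb p) \<le> inner u y \<and> (inner u y \<le> inner u (emb p) \<longrightarrow> (\<exists>r. pos r \<and> y = emb p + r))"
proof -
  obtain c r where yc: "y = c + r" and c: "c \<in> convex hull (emb ` S)" and r: "pos r"
    using y unfolding newt_def pos_def by auto
  have ur: "0 \<le> inner u r" using inner_pos u r by blast
  show ?thesis
  proof (cases "S - {p} = {}")
    case True
    then have "S = {p}" using p by auto
    then have "c = emb p" using c by simp
    then show ?thesis using yc r ur by (auto simp: inner_add_right)
  next
    case False
    have Sins: "emb ` S = insert (emb p) (emb ` (S - {p}))" using p by auto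
    have "c \<in> convex hull (insert (emb p) (emb ` (S - {p})))" using c Sins by simp
    also have "\<dots> = {x. \<exists>u\<ge>0. \<exists>v\<ge>0. \<exists>b. (u + v = 1) \<and> b \<in> (convex hull (emb ` (S - {p}))) \<and> (x = u *\<^sub>R emb p + v *\<^sub>R b)}"
      using False by (intro convex_hull_insert) auto
    finally obtain al be b where ab: "al \<ge> 0" "be \<ge> 0" "al + be = 1" and b: "b \<in> convex hull (emb ` (S - {p}))"
      and cb: "c = al *\<^sub>R emb p + be *\<^sub>R b" by blast
    have "b \<in> newt (S - {p})" using b hull_sub_newt by blast
    then have hb: "H (S - {p}) u \<le> inner u b" using G1a fin u by blast
    have sp: "inner u (emb p) < H (S - {p}) u" using sep False by blast
    have iy: "inner u y = al * inner u (emb p) + be * inner u b + inner u r"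
      by (simp add: yc cb inner_add_right)
    have "be * inner u (emb p) \<le> be * inner u b" using hb sp ab by (intro mult_left_mono) auto
    moreover have sum1: "al * inner u (emb p) + be * inner u (emb p) = inner u (emb p)"
      using ab(3) by (metis distrib_right mult_1)
    ultimately have ge: "inner u (emb p) \<le> inner u y" using iy ur by linarith
    moreover have "inner u y \<le> inner u (emb p) \<longrightarrow> (\<exists>r. pos r \<and> y = emb p + r)"
    proof
      assume le: "inner u y \<le> inner u (emb p)"
      have "be = 0"
      proof (rule ccontr)
        assume "be \<noteq> 0"
        then have "be * inner u (emb p) < be * inner u b" using hb sp ab by (intro mult_strict_left_mono) auto
        then show False using le iy ur sum1 by linarith
      qed
      then have "al = 1" using ab by simp
      then show "\<exists>r. pos r \<and> y = emb p + r" using yc cb \<open>be = 0\<close> r by auto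
    qed
    ultimately show ?thesis by blast
  qed
qed

lemma NV:
  assumes fin: "finite S" and p: "p \<in> S" and nin: "emb p \<notin> newt (S - {p})"
  shows "emb p extreme_point_of newt S"
proof -
  obtain u where u: "pos u" and sep: "S - {p} \<noteq> {} \<Longrightarrow> inner u (emb p) < H (S - {p}) u"
  proof (cases "S - {p} = {}")
    case True then show ?thesis using that[of 0] by (auto simp: pos_def)
  next
    case False
    then obtain u where "pos u" "\<not> H (S - {p}) u \<le> inner u (emb p)"
      using G1[of "S - {p}" "emb p"] nin fin by auto
    then show ?thesis using that[of u] by auto
  qed
  note D = decomp[OF fin p u sep]
  show ?thesis unfolding extreme_point_of_def
  proof (intro conjI ballI)
    show "emb p \<in> newt S" using emb_in_newt p by blast
  next
    fix y z assume y: "y \<in> newt S" and z: "z \<in> newt S"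
    show "emb p \<notin> open_segment y z"
    proof
      assume "emb p \<in> open_segment y z"
      then obtain t where yz: "y \<noteq> z" and t: "0 < t" "t < 1" and e: "emb p = (1 - t) *\<^sub>R y + t *\<^sub>R z"
        unfolding in_segment by auto
      have ey: "inner u (emb p) \<le> inner u y" and ez: "inner u (emb p) \<le> inner u z"
        using D y z by blast+
      have "inner u (emb p) = (1 - t) * inner u y + t * inner u z"
        by (subst e) (simp add: inner_add_right)
      then have sum0: "(1 - t) * (inner u y - inner u (emb p)) + t * (inner u z - inner u (emb p)) = 0"
        by (simp add: algebra_simps)
      have n1: "0 \<le> (1 - t) * (inner u y - inner u (emb p))" using ey t by simp
      have n2: "0 \<le> t * (inner u z - inner u (emb p))" using ez t by simp
      have "(1 - t) * (inner u y - inner u (emb p)) = 0" "t * (inner u z - inner u (emb p)) = 0"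
        using sum0 n1 n2 by linarith+
      then have "inner u y \<le> inner u (emb p) \<and> inner u z \<le> inner u (emb p)"
        using t by auto
      then obtain r1 r2 where r1: "pos r1" "y = emb p + r1" and r2: "pos r2" "z = emb p + r2"
        using D y z by blast
      have "(1 - t) *\<^sub>R r1 + t *\<^sub>R r2 = 0"
        using e r1(2) r2(2) by (simp add: algebra_simps)
      then have "\<forall>i. (1 - t) * r1$i + t * r2$i = 0" by (auto simp: vec_eq_iff)
      have "r1 = 0"
      proof -
        have "r1$i = 0" for i
        proof -
          have a: "0 \<le> (1 - t) * r1$i" "0 \<le> t * r2$i" using r1(1) r2(1) t unfolding pos_def by auto
          have "(1 - t) * r1$i + t * r2$i = 0" using \<open>\<forall>i. _\<close> by blast
          then have "(1 - t) * r1$i = 0" using a by linarith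
          then show ?thesis using t by simp
        qed
        then show ?thesis by (simp add: vec_eq_iff)
      qed
      moreover have "r2 = 0"
      proof -
        have "r2$i = 0" for i
        proof -
          have a: "0 \<le> (1 - t) * r1$i" "0 \<le> t * r2$i" using r1(1) r2(1) t unfolding pos_def by auto
          have "(1 - t) * r1$i + t * r2$i = 0" using \<open>\<forall>i. _\<close> by blast
          then have "t * r2$i = 0" using a by linarith
          then show ?thesis using t by simp
        qed
        then show ?thesis by (simp add: vec_eq_iff)
      qed
      ultimately show False using yz r1 r2 by simp
    qed
  qed
qed

lemma newt_eq_H: assumes "finite S" "finite T" "S \<noteq> {}" "T \<noteq> {}" "\<And>u. pos u \<Longrightarrow> H S u = H T u"
  shows "newt S = newt T"
  using G1[OF assms(1,3)] G1[OF assms(2,4)] assms(5) by auto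

lemma G2: "finite S \<Longrightarrow> newt (vert S) = newt S"
proof (induction "card S" arbitrary: S rule: less_induct)
  case less
  show ?case
  proof (cases "vert S = S")
    case True then show ?thesis by simp
  next
    case False
    then obtain p where p: "p \<in> S" "p \<notin> vert S" using vert_sub by blast
    then have "\<not> emb p extreme_point_of newt S" unfolding vert_def by auto
    then have pin: "emb p \<in> newt (S - {p})" using NV less.prems p by blast
    then have ne: "S - {p} \<noteq> {}" by (metis empty_iff newt_empty)
    have S: "S = insert p (S - {p})" using p by auto
    have "newt S = newt (S - {p})"
    proof (rule newt_eq_H)
      fix u :: "real^'a" assume u: "pos u"
      have "H (S - {p}) u \<le> inner u (emb p)" using G1a pin u less.prems by blast
      then show "H S u = H (S - {p}) u"
        using H_insert[of "S - {p}" p u] ne less.prems S by (metis finite_Diff min.absorb2)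
    qed (use less.prems ne in auto)
    moreover have "vert S = vert (S - {p})" unfolding vert_def using calculation by simp
    moreover have "newt (vert (S - {p})) = newt (S - {p})"
      using less.hyps[of "S - {p}"] less.prems p by (meson card_Diff1_less finite_Diff)
    ultimately show ?thesis by simp
  qed
qed



definition psum :: "'n pt set \<Rightarrow> 'n pt set \<Rightarrow> 'n pt set" where
  "psum A B = {padd x y | x y. x \<in> A \<and> y \<in> B}"

definition HE :: "'n::finite pt set \<Rightarrow> real^'n \<Rightarrow> ereal" where
  "HE S u = (if S = {} then \<infinity> else ereal (H S u))"

lemma vtimes_psum: "vtimes a b = vert (psum a b)"
  unfolding vtimes_def psum_def ..

lemma finite_psum: "finite A \<Longrightarrow> finite B \<Longrightarrow> finite (psum A B)"
proof -
  assume "finite A" "finite B"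
  then have "finite ((\<lambda>(x, y). padd x y) ` (A \<times> B))" by auto
  moreover have "psum A B = (\<lambda>(x, y). padd x y) ` (A \<times> B)" unfolding psum_def by auto
  ultimately show ?thesis by simp
qed

lemma psum_empty_iff: "psum A B = {} \<longleftrightarrow> A = {} \<or> B = {}"
  unfolding psum_def by auto

lemma newt_sub_iff:
  assumes "finite S" "finite T"
  shows "newt S \<subseteq> newt T \<longleftrightarrow> (\<forall>u. pos u \<longrightarrow> HE T u \<le> HE S u)"
proof (cases "S = {}")
  case True then show ?thesis by (simp add: HE_def)
next
  case SNE: False
  show ?thesis
  proof (cases "T = {}")
    case True
    have "pos (0::real^'a)" by (simp add: pos_def)
    then show ?thesis using True SNE newt_ne[OF SNE] by (auto simp: HE_def)
  next
    case TNE: False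
    show ?thesis
    proof
      assume sub: "newt S \<subseteq> newt T"
      show "\<forall>u. pos u \<longrightarrow> HE T u \<le> HE S u"
      proof (intro allI impI)
        fix u :: "real^'a" assume u: "pos u"
        obtain p where p: "p \<in> S" "H S u = inner u (emb p)" using H_attained assms(1) SNE by blast
        have "emb p \<in> newt T" using sub emb_in_newt[OF p(1)] by blast
        then have "H T u \<le> H S u" using G1a[OF assms(2) _ u] p by simp
        then show "HE T u \<le> HE S u" using SNE TNE by (simp add: HE_def)
      qed
    next
      assume h: "\<forall>u. pos u \<longrightarrow> HE T u \<le> HE S u"
      show "newt S \<subseteq> newt T"
      proof
        fix x assume x: "x \<in> newt S"
        show "x \<in> newt T"
        proof (rule G1b[OF assms(2) TNE])
          fix u :: "real^'a" assume u: "pos u"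
          have "H T u \<le> H S u" using h u SNE TNE by (auto simp: HE_def)
          also have "\<dots> \<le> inner u x" using G1a[OF assms(1) x u] .
          finally show "H T u \<le> inner u x" .
        qed
      qed
    qed
  qed
qed

lemma newt_eq_iff:
  assumes "finite S" "finite T"
  shows "newt S = newt T \<longleftrightarrow> (\<forall>u. pos u \<longrightarrow> HE S u = HE T u)"
proof -
  have "newt S = newt T \<longleftrightarrow> newt S \<subseteq> newt T \<and> newt T \<subseteq> newt S" by blast
  also have "\<dots> \<longleftrightarrow> (\<forall>u. pos u \<longrightarrow> HE T u \<le> HE S u) \<and> (\<forall>u. pos u \<longrightarrow> HE S u \<le> HE T u)"
    using newt_sub_iff[OF assms] newt_sub_iff[OF assms(2,1)] by simp
  also have "\<dots> \<longleftrightarrow> (\<forall>u. pos u \<longrightarrow> HE S u = HE T u)" by (auto intro: antisym)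
  finally show ?thesis .
qed

lemma finite_vert: "finite S \<Longrightarrow> finite (vert S)"
  using vert_sub finite_subset by blast

lemma HE_vert: "finite S \<Longrightarrow> pos u \<Longrightarrow> HE (vert S) u = HE S u"
proof -
  assume f: "finite S" and u: "pos u"
  have "newt (vert S) = newt S" using G2[OF f] .
  then have "\<forall>u. pos u \<longrightarrow> HE (vert S) u = HE S u" using newt_eq_iff[OF finite_vert[OF f] f] by simp
  then show ?thesis using u by simp
qed

lemma vert_empty_iff: "finite S \<Longrightarrow> vert S = {} \<longleftrightarrow> S = {}"
proof -
  assume f: "finite S"
  have "vert S = {} \<longleftrightarrow> newt (vert S) = {}" using newt_ne newt_empty by metis
  also have "\<dots> \<longleftrightarrow> newt S = {}" using G2[OF f] by simp
  also have "\<dots> \<longleftrightarrow> S = {}" using newt_ne newt_empty by metis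
  finally show ?thesis .
qed

lemma vert_vert: "finite S \<Longrightarrow> vert (vert S) = vert S"
  using G2[of S] unfolding vert_def by simp

lemma vert_VB: "finite S \<Longrightarrow> vert S \<in> VB"
  unfolding VB_def using finite_vert vert_vert by blast

lemma vert_eq: "finite S \<Longrightarrow> finite T \<Longrightarrow> (\<And>u. pos u \<Longrightarrow> HE S u = HE T u) \<Longrightarrow> vert S = vert T"
proof -
  assume "finite S" "finite T" "\<And>u. pos u \<Longrightarrow> HE S u = HE T u"
  then have "newt S = newt T" using newt_eq_iff by blast
  then show ?thesis unfolding vert_def by simp
qed

lemma VB_eq: "a \<in> VB \<Longrightarrow> b \<in> VB \<Longrightarrow> (\<And>u. pos u \<Longrightarrow> HE a u = HE b u) \<Longrightarrow> a = b"
proof -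
  assume a: "a \<in> VB" "b \<in> VB" "\<And>u. pos u \<Longrightarrow> HE a u = HE b u"
  then have "vert a = vert b" using vert_eq[of a b] unfolding VB_def by blast
  then show ?thesis using a(1,2) unfolding VB_def by simp
qed

lemma HE_union: "finite A \<Longrightarrow> finite B \<Longrightarrow> HE (A \<union> B) u = min (HE A u) (HE B u)"
proof -
  assume f: "finite A" "finite B"
  show ?thesis
  proof (cases "A = {} \<or> B = {}")
    case True then show ?thesis by (auto simp: HE_def)
  next
    case False
    then show ?thesis unfolding HE_def H_def using f by (simp add: image_Un Min_Un)
  qed
qed

lemma emb_padd: "emb (padd x y) = emb x + emb y"
  unfolding emb_def padd_def by (auto simp: vec_eq_iff)

lemma H_psum: assumes "finite A" "finite B" "A \<noteq> {}" "B \<noteq> {}"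
  shows "H (psum A B) u = H A u + H B u"
proof (rule antisym)
  obtain x where x: "x \<in> A" "H A u = inner u (emb x)" using H_attained assms by blast
  obtain y where y: "y \<in> B" "H B u = inner u (emb y)" using H_attained assms by blast
  have "padd x y \<in> psum A B" unfolding psum_def using x y by blast
  then show "H (psum A B) u \<le> H A u + H B u"
    using H_le[OF finite_psum[OF assms(1,2)], of "padd x y" u] x y by (simp add: emb_padd inner_add_right)
next
  have "psum A B \<noteq> {}" using assms psum_empty_iff by blast
  then obtain z where z: "z \<in> psum A B" "H (psum A B) u = inner u (emb z)"
    using H_attained finite_psum[OF assms(1,2)] by blast
  then obtain x y where "x \<in> A" "y \<in> B" "z = padd x y" unfolding psum_def by blast
  then show "H A u + H B u \<le> H (psum A B) u"
    using z H_le[OF assms(1)] H_le[OF assms(2)] by (simp add: emb_padd inner_add_right add_mono)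
qed

lemma HE_psum: "finite A \<Longrightarrow> finite B \<Longrightarrow> HE (psum A B) u = HE A u + HE B u"
proof -
  assume f: "finite A" "finite B"
  show ?thesis
  proof (cases "A = {} \<or> B = {}")
    case True
    then have "psum A B = {}" using psum_empty_iff by blast
    then show ?thesis using True by (auto simp: HE_def)
  next
    case False
    then have "psum A B \<noteq> {}" using psum_empty_iff by blast
    then show ?thesis using False H_psum[OF f, of u] by (simp add: HE_def)
  qed
qed

lemma HE_not_minf: "HE S u \<noteq> -\<infinity>"
  unfolding HE_def by auto

lemma HE_finite: "S \<noteq> {} \<Longrightarrow> HE S u = ereal (H S u)"
  unfolding HE_def by auto



definition fv :: "'n::finite pt set \<Rightarrow> 'n pt set \<Rightarrow> real^'n \<Rightarrow> ereal" where
  "fv a b u = HE a u - HE b u"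

lemma ereal_cross: "(x + ereal d = y + ereal b) \<longleftrightarrow> (x - ereal b = y - ereal d)"
  by (cases x; cases y) (auto simp: algebra_simps)

lemma Fdom_iff: "(a, b) \<in> Fdom \<longleftrightarrow> a \<in> VB \<and> b \<in> VB \<and> b \<noteq> {}"
  unfolding Fdom_def by simp

lemma VB_finite: "a \<in> VB \<Longrightarrow> finite a"
  unfolding VB_def by simp

lemma newt_vert_eq: "finite S \<Longrightarrow> finite T \<Longrightarrow> vert S = vert T \<Longrightarrow> newt S = newt T"
  using G2 by metis

lemma frel_iff:
  assumes ab: "(a, b) \<in> Fdom" and cd: "(c, d) \<in> Fdom"
  shows "((a, b), (c, d)) \<in> frel \<longleftrightarrow> (\<forall>u. pos u \<longrightarrow> fv a b u = fv c d u)"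
proof -
  have f: "finite a" "finite b" "finite c" "finite d" "b \<noteq> {}" "d \<noteq> {}"
    using ab cd by (auto simp: Fdom_iff VB_finite)
  have "((a, b), (c, d)) \<in> frel \<longleftrightarrow> vert (psum a d) = vert (psum c b)"
    using ab cd unfolding frel_def by (simp add: vtimes_psum)
  also have "\<dots> \<longleftrightarrow> newt (psum a d) = newt (psum c b)"
  proof
    assume "vert (psum a d) = vert (psum c b)"
    then show "newt (psum a d) = newt (psum c b)"
      using newt_vert_eq[OF finite_psum finite_psum] f by blast
  qed (simp add: vert_def)
  also have "\<dots> \<longleftrightarrow> (\<forall>u. pos u \<longrightarrow> HE (psum a d) u = HE (psum c b) u)"
    using newt_eq_iff finite_psum f by blast
  also have "\<dots> \<longleftrightarrow> (\<forall>u. pos u \<longrightarrow> HE a u + HE d u = HE c u + HE b u)"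
    by (simp add: HE_psum f)
  also have "\<dots> \<longleftrightarrow> (\<forall>u. pos u \<longrightarrow> fv a b u = fv c d u)"
    unfolding fv_def using HE_finite[OF f(5)] HE_finite[OF f(6)] ereal_cross by simp
  finally show ?thesis .
qed

lemma equiv_frel: "equiv Fdom frel"
proof (rule equivI)
  show "frel \<subseteq> Fdom \<times> Fdom" unfolding frel_def by auto
  show "refl_on Fdom frel"
    unfolding refl_on_def frel_def by auto
  show "sym frel"
    unfolding sym_def frel_def by auto
  show "trans frel"
  proof (rule transI)
    fix x y z assume xy: "(x, y) \<in> frel" and yz: "(y, z) \<in> frel"
    obtain a b c d e f where xyz: "x = (a, b)" "y = (c, d)" "z = (e, f)" by (metis surj_pair)
    have D: "(a, b) \<in> Fdom" "(c, d) \<in> Fdom" "(e, f) \<in> Fdom"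
      using xy yz xyz unfolding frel_def by auto
    show "(x, z) \<in> frel" using xy yz frel_iff[OF D(1) D(2)] frel_iff[OF D(2) D(3)] frel_iff[OF D(1) D(3)]
      xyz by simp
  qed
qed

lemma fcls_VBfrac: "(a, b) \<in> Fdom \<Longrightarrow> fcls a b \<in> VBfrac"
  unfolding fcls_def VBfrac_def by (rule quotientI)

lemma fcls_self: "(a, b) \<in> Fdom \<Longrightarrow> (a, b) \<in> fcls a b"
  unfolding fcls_def using equiv_class_self[OF equiv_frel] by blast

lemma VBfrac_mem: assumes "X \<in> VBfrac" "p \<in> X" shows "p \<in> Fdom \<and> X = fcls (fst p) (snd p)"
proof -
  obtain x where x: "X = frel `` {x}" "x \<in> Fdom" using assms(1) unfolding VBfrac_def by (rule quotientE)
  have "(x, p) \<in> frel" using assms(2) x by simp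
  then have "p \<in> Fdom" "frel `` {x} = frel `` {p}" using equiv_class_eq_iff[OF equiv_frel] by blast+
  then show ?thesis using x by (simp add: fcls_def)
qed

lemma fcls_eq_iff: "(a, b) \<in> Fdom \<Longrightarrow> (c, d) \<in> Fdom \<Longrightarrow>
   fcls a b = fcls c d \<longleftrightarrow> (\<forall>u. pos u \<longrightarrow> fv a b u = fv c d u)"
  unfolding fcls_def using eq_equiv_class_iff[OF equiv_frel] frel_iff by blast

lemma VBfrac_ne: "X \<in> VBfrac \<Longrightarrow> \<exists>p. p \<in> X"
  using in_quotient_imp_non_empty[OF equiv_frel] unfolding VBfrac_def by blast

definition vl :: "('n::finite pt set \<times> 'n pt set) set \<Rightarrow> real^'n \<Rightarrow> ereal" where
  "vl X u = fv (fst (SOME p. p \<in> X)) (snd (SOME p. p \<in> X)) u"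

lemma vl_rep: assumes "X \<in> VBfrac" "(a, b) \<in> X" "pos u" shows "vl X u = fv a b u"
proof -
  define p where "p = (SOME p. p \<in> X)"
  have p: "p \<in> X" unfolding p_def using VBfrac_ne[OF assms(1)] by (metis someI)
  have A: "p \<in> Fdom" "X = fcls (fst p) (snd p)" using VBfrac_mem[OF assms(1) p] by auto
  have B: "(a, b) \<in> Fdom" "X = fcls a b" using VBfrac_mem[OF assms(1,2)] by auto
  have "fv (fst p) (snd p) u = fv a b u" using fcls_eq_iff[of "fst p" "snd p" a b] A B assms(3) by auto
  then show ?thesis unfolding vl_def p_def[symmetric] .
qed

lemma vl_ext: assumes "X \<in> VBfrac" "Y \<in> VBfrac" "\<And>u. pos u \<Longrightarrow> vl X u = vl Y u" shows "X = Y"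
proof -
  obtain a b where ab: "(a, b) \<in> X" using VBfrac_ne[OF assms(1)] by auto
  obtain c d where cd: "(c, d) \<in> Y" using VBfrac_ne[OF assms(2)] by auto
  have A: "(a, b) \<in> Fdom" "X = fcls a b" using VBfrac_mem[OF assms(1) ab] by auto
  have B: "(c, d) \<in> Fdom" "Y = fcls c d" using VBfrac_mem[OF assms(2) cd] by auto
  have "\<forall>u. pos u \<longrightarrow> fv a b u = fv c d u" using vl_rep[OF assms(1) ab] vl_rep[OF assms(2) cd] assms(3) by auto
  then show ?thesis using A B fcls_eq_iff by blast
qed

lemma vl_fcls: "(a, b) \<in> Fdom \<Longrightarrow> pos u \<Longrightarrow> vl (fcls a b) u = fv a b u"
  using vl_rep fcls_VBfrac fcls_self by blast

definition Q :: "'n::finite pt set \<Rightarrow> 'n pt set \<Rightarrow> ('n pt set \<times> 'n pt set) set" where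
  "Q a b = fcls (vert a) (vert b)"

lemma Q_Fdom: "finite a \<Longrightarrow> finite b \<Longrightarrow> b \<noteq> {} \<Longrightarrow> (vert a, vert b) \<in> Fdom"
  using vert_VB vert_empty_iff Fdom_iff by blast

lemma Q_VBfrac: "finite a \<Longrightarrow> finite b \<Longrightarrow> b \<noteq> {} \<Longrightarrow> Q a b \<in> VBfrac"
  unfolding Q_def using Q_Fdom fcls_VBfrac by blast

lemma vl_Q: "finite a \<Longrightarrow> finite b \<Longrightarrow> b \<noteq> {} \<Longrightarrow> pos u \<Longrightarrow> vl (Q a b) u = fv a b u"
proof -
  assume a: "finite a" "finite b" "b \<noteq> {}" "pos u"
  have "vl (Q a b) u = fv (vert a) (vert b) u" unfolding Q_def using vl_fcls[OF Q_Fdom[OF a(1-3)] a(4)] .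
  also have "\<dots> = fv a b u" unfolding fv_def using HE_vert[OF a(1) a(4)] HE_vert[OF a(2) a(4)] by simp
  finally show ?thesis .
qed

lemma VBfrac_Q: assumes "X \<in> VBfrac" "(a, b) \<in> X" shows "X = Q a b" "finite a" "finite b" "b \<noteq> {}"
proof -
  have A: "(a, b) \<in> Fdom" "X = fcls a b" using VBfrac_mem[OF assms] by auto
  then show "X = Q a b" unfolding Q_def Fdom_iff VB_def by auto
  show "finite a" "finite b" "b \<noteq> {}" using A by (auto simp: Fdom_iff VB_def)
qed

lemma fv_not_minf: "b \<noteq> {} \<Longrightarrow> fv a b u \<noteq> -\<infinity>"
  unfolding fv_def HE_def by auto

lemma vl_not_minf: "X \<in> VBfrac \<Longrightarrow> pos u \<Longrightarrow> vl X u \<noteq> -\<infinity>"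
  using VBfrac_ne VBfrac_mem vl_rep fv_not_minf Fdom_iff by (metis prod.collapse)

lemma ereal_min_sub: "min (x + ereal d) (y + ereal b) - (ereal b + ereal d) = min (x - ereal b) (y - ereal d)"
  by (cases x; cases y) (auto simp: min_def algebra_simps)

lemma ereal_add_sub: "x \<noteq> -\<infinity> \<Longrightarrow> y \<noteq> -\<infinity> \<Longrightarrow> (x + y) - ereal (b + d) = (x - ereal b) + (y - ereal d)"
  by (cases x; cases y) (auto simp: algebra_simps)

lemma fplus_props: assumes X: "X \<in> VBfrac" and Y: "Y \<in> VBfrac"
  shows "fplus X Y \<in> VBfrac" "pos u \<Longrightarrow> vl (fplus X Y) u = min (vl X u) (vl Y u)"
proof -
  define p where "p = (SOME p. p \<in> X)"
  have p: "p \<in> X" unfolding p_def using VBfrac_ne[OF X] by (metis someI)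
  define q where "q = (SOME p. p \<in> Y)"
  have q: "q \<in> Y" unfolding q_def using VBfrac_ne[OF Y] by (metis someI)
  obtain a b where pab: "p = (a, b)" by fastforce
  obtain c d where qcd: "q = (c, d)" by fastforce
  have D: "(a, b) \<in> Fdom" "(c, d) \<in> Fdom" using VBfrac_mem[OF X p] VBfrac_mem[OF Y q] pab qcd by auto
  have f: "finite a" "finite b" "finite c" "finite d" "b \<noteq> {}" "d \<noteq> {}"
    using D by (auto simp: Fdom_iff VB_finite)
  have eq: "fplus X Y = fcls (vplus (vtimes a d) (vtimes c b)) (vtimes b d)"
    unfolding fplus_def p_def[symmetric] q_def[symmetric] pab qcd Let_def by simp
  have fin2: "finite (vert (psum a d))" "finite (vert (psum c b))"
    using finite_vert finite_psum f by blast+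
  have D2: "(vplus (vtimes a d) (vtimes c b), vtimes b d) \<in> Fdom"
  proof -
    have "psum b d \<noteq> {}" using f psum_empty_iff by blast
    then have "vert (psum b d) \<noteq> {}" using vert_empty_iff[OF finite_psum[OF f(2,4)]] by blast
    then show ?thesis unfolding Fdom_iff vplus_def vtimes_psum
      using vert_VB fin2 finite_psum f by auto
  qed
  show "fplus X Y \<in> VBfrac" unfolding eq using fcls_VBfrac D2 by blast
  assume u: "pos u"
  have "vl (fplus X Y) u = fv (vplus (vtimes a d) (vtimes c b)) (vtimes b d) u"
    unfolding eq using vl_fcls[OF D2 u] .
  also have "\<dots> = min (HE a u + HE d u) (HE c u + HE b u) - (HE b u + HE d u)"
    unfolding fv_def vplus_def vtimes_psum
    by (simp add: HE_vert[OF _ u] HE_union fin2 finite_psum f HE_psum finite_vert)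
  also have "\<dots> = min (HE a u - HE b u) (HE c u - HE d u)"
    using HE_finite[OF f(5)] HE_finite[OF f(6)] ereal_min_sub by simp
  also have "\<dots> = min (vl X u) (vl Y u)"
    using vl_rep[OF X _ u, of a b] vl_rep[OF Y _ u, of c d] p q pab qcd by (simp add: fv_def)
  finally show "vl (fplus X Y) u = min (vl X u) (vl Y u)" .
qed

lemma fmult_props: assumes X: "X \<in> VBfrac" and Y: "Y \<in> VBfrac"
  shows "fmult X Y \<in> VBfrac" "pos u \<Longrightarrow> vl (fmult X Y) u = vl X u + vl Y u"
proof -
  define p where "p = (SOME p. p \<in> X)"
  have p: "p \<in> X" unfolding p_def using VBfrac_ne[OF X] by (metis someI)
  define q where "q = (SOME p. p \<in> Y)"
  have q: "q \<in> Y" unfolding q_def using VBfrac_ne[OF Y] by (metis someI)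
  obtain a b where pab: "p = (a, b)" by fastforce
  obtain c d where qcd: "q = (c, d)" by fastforce
  have D: "(a, b) \<in> Fdom" "(c, d) \<in> Fdom" using VBfrac_mem[OF X p] VBfrac_mem[OF Y q] pab qcd by auto
  have f: "finite a" "finite b" "finite c" "finite d" "b \<noteq> {}" "d \<noteq> {}"
    using D by (auto simp: Fdom_iff VB_finite)
  have eq: "fmult X Y = fcls (vtimes a c) (vtimes b d)"
    unfolding fmult_def p_def[symmetric] q_def[symmetric] pab qcd Let_def by simp
  have D2: "(vtimes a c, vtimes b d) \<in> Fdom"
  proof -
    have "psum b d \<noteq> {}" using f psum_empty_iff by blast
    then have "vert (psum b d) \<noteq> {}" using vert_empty_iff[OF finite_psum[OF f(2,4)]] by blast
    then show ?thesis unfolding Fdom_iff vtimes_psum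
      using vert_VB finite_psum f by auto
  qed
  show "fmult X Y \<in> VBfrac" unfolding eq using fcls_VBfrac D2 by blast
  assume u: "pos u"
  have "vl (fmult X Y) u = fv (vtimes a c) (vtimes b d) u"
    unfolding eq using vl_fcls[OF D2 u] .
  also have "\<dots> = (HE a u + HE c u) - (HE b u + HE d u)"
    unfolding fv_def vtimes_psum
    by (simp add: HE_vert[OF _ u] finite_psum f HE_psum)
  also have "\<dots> = (HE a u - HE b u) + (HE c u - HE d u)"
    using HE_finite[OF f(5)] HE_finite[OF f(6)] ereal_add_sub[OF HE_not_minf HE_not_minf] by simp
  also have "\<dots> = vl X u + vl Y u"
    using vl_rep[OF X _ u, of a b] vl_rep[OF Y _ u, of c d] p q pab qcd by (simp add: fv_def)
  finally show "vl (fmult X Y) u = vl X u + vl Y u" .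
qed

lemma vone_VB: "vone \<in> VB" and vone_ne: "vone \<noteq> {}"
proof -
  have "vert vone \<subseteq> vone" by (rule vert_sub)
  moreover have "vert vone \<noteq> {}" using vert_empty_iff[of vone] by (simp add: vone_def)
  ultimately have "vert vone = vone" unfolding vone_def by blast
  then show "vone \<in> VB" unfolding VB_def vone_def by simp
  show "vone \<noteq> {}" by (simp add: vone_def)
qed

lemma empty_VB: "{} \<in> VB"
  unfolding VB_def using vert_sub by blast

lemma HE_vone: "HE vone u = 0"
  unfolding HE_def H_def vone_def emb_def by (simp add: zero_ereal_def inner_vec_def)

lemma fzero_props: "fzero \<in> VBfrac" "pos u \<Longrightarrow> vl fzero u = \<infinity>"
proof -
  have D: "({}, vone) \<in> Fdom" using Fdom_iff empty_VB vone_VB vone_ne by blast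
  show "fzero \<in> VBfrac" unfolding fzero_def using fcls_VBfrac[OF D] .
  show "pos u \<Longrightarrow> vl fzero u = \<infinity>" unfolding fzero_def using vl_fcls[OF D]
    by (simp add: fv_def HE_def[of "{}"] HE_vone)
qed

lemma fone_props: "fone \<in> VBfrac" "pos u \<Longrightarrow> vl fone u = 0"
proof -
  have D: "(vone, vone) \<in> Fdom" using Fdom_iff vone_VB vone_ne by blast
  show "fone \<in> VBfrac" unfolding fone_def using fcls_VBfrac[OF D] .
  show "pos u \<Longrightarrow> vl fone u = 0" unfolding fone_def using vl_fcls[OF D]
    by (simp add: fv_def HE_vone)
qed

lemma fle_iff: "X \<in> VBfrac \<Longrightarrow> Y \<in> VBfrac \<Longrightarrow> fle X Y \<longleftrightarrow> (\<forall>u. pos u \<longrightarrow> vl Y u \<le> vl X u)"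
proof -
  assume X: "X \<in> VBfrac" and Y: "Y \<in> VBfrac"
  show ?thesis
  proof
    assume "fle X Y"
    then have "fplus X Y = Y" unfolding fle_def .
    then show "\<forall>u. pos u \<longrightarrow> vl Y u \<le> vl X u" using fplus_props(2)[OF X Y] by (metis min.cobounded1)
  next
    assume "\<forall>u. pos u \<longrightarrow> vl Y u \<le> vl X u"
    then show "fle X Y" unfolding fle_def
      by (intro vl_ext fplus_props X Y) (simp add: fplus_props(2)[OF X Y] min_absorb2)
  qed
qed

lemma Circ_iff: "X \<in> Circ \<longleftrightarrow> X \<in> VBfrac \<and> (\<forall>u. pos u \<longrightarrow> 0 \<le> vl X u)"
proof -
  have "X \<in> VBfrac \<Longrightarrow> fle X fone \<longleftrightarrow> (\<forall>u. pos u \<longrightarrow> 0 \<le> vl X u)"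
  proof -
    assume X: "X \<in> VBfrac"
    have "fle X fone \<longleftrightarrow> (\<forall>u. pos u \<longrightarrow> vl fone u \<le> vl X u)" using fle_iff[OF X fone_props(1)] .
    also have "\<dots> \<longleftrightarrow> (\<forall>u. pos u \<longrightarrow> 0 \<le> vl X u)" by (auto simp: fone_props(2))
    finally show ?thesis .
  qed
  then show ?thesis unfolding Circ_def by blast
qed



lemma H_single: "H {p} u = inner u (emb p)"
  unfolding H_def by simp

lemma H_pair: "H {p, q} u = min (inner u (emb p)) (inner u (emb q))"
  unfolding H_def by simp

lemma H_anti: "finite b \<Longrightarrow> b' \<subseteq> b \<Longrightarrow> b' \<noteq> {} \<Longrightarrow> H b u \<le> H b' u"
  unfolding H_def by (intro Min_antimono) auto

lemma vl_Qs: "finite b \<Longrightarrow> b \<noteq> {} \<Longrightarrow> pos u \<Longrightarrow> vl (Q {p} b) u = ereal (inner u (emb p) - H b u)"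
  using vl_Q[of "{p}" b u] by (simp add: fv_def HE_def H_single)

lemma Q_Circ: assumes "finite a" "finite b" "b \<noteq> {}" "\<And>u. pos u \<Longrightarrow> ereal (H b u) \<le> HE a u"
  shows "Q a b \<in> Circ"
proof -
  have "0 \<le> vl (Q a b) u" if u: "pos u" for u
  proof -
    have "vl (Q a b) u = HE a u - ereal (H b u)" using vl_Q[OF assms(1-3) u] by (simp add: fv_def HE_def assms(3))
    then show ?thesis using assms(4)[OF u] by (cases "HE a u") auto
  qed
  then show ?thesis using Circ_iff Q_VBfrac assms by blast
qed

lemma Qs_Circ: "finite b \<Longrightarrow> b \<noteq> {} \<Longrightarrow> (\<And>u. pos u \<Longrightarrow> H b u \<le> inner u (emb w)) \<Longrightarrow> Q {w} b \<in> Circ"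
  by (rule Q_Circ) (auto simp: HE_def H_single)

lemma Circ_VBfrac: "X \<in> Circ \<Longrightarrow> X \<in> VBfrac"
  using Circ_iff by blast

lemma Circ_nonneg: "X \<in> Circ \<Longrightarrow> pos u \<Longrightarrow> 0 \<le> vl X u"
  using Circ_iff by blast

lemma fone_Circ: "fone \<in> Circ"
  by (simp add: Circ_iff fone_props)

lemma fzero_Circ: "fzero \<in> Circ"
  by (simp add: Circ_iff fzero_props)

lemma fplus_Circ: "X \<in> Circ \<Longrightarrow> Y \<in> Circ \<Longrightarrow> fplus X Y \<in> Circ"
  unfolding Circ_iff by (simp add: fplus_props)

lemma fmult_Circ: "X \<in> Circ \<Longrightarrow> Y \<in> Circ \<Longrightarrow> fmult X Y \<in> Circ"
  unfolding Circ_iff by (simp add: fmult_props)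

lemma Q_empty: assumes f: "finite b" "b \<noteq> {}" shows "Q {} b = fzero"
proof (rule vl_ext)
  show "Q {} b \<in> VBfrac" using f by (auto intro!: Q_VBfrac)
  show "fzero \<in> VBfrac" by (rule fzero_props)
  fix u :: "real^'a" assume u: "pos u"
  have "vl (Q {} b) u = \<infinity> - HE b u" using vl_Q[OF _ f u, of "{}"] by (simp add: fv_def HE_def)
  also have "\<dots> = \<infinity>" using HE_finite[OF f(2)] by simp
  finally show "vl (Q {} b) u = vl fzero u" using fzero_props(2)[OF u] by simp
qed

lemma ereal_min_minus: "min x y - ereal c = min (x - ereal c) (y - ereal c)"
  by (cases x; cases y) (auto simp: min_def)

lemma Q_insert: assumes f: "finite A" "finite b" "b \<noteq> {}"
  shows "Q (insert w A) b = fplus (Q {w} b) (Q A b)"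
proof (rule vl_ext)
  have Qs: "Q (insert w A) b \<in> VBfrac" "Q {w} b \<in> VBfrac" "Q A b \<in> VBfrac"
    using f by (auto intro!: Q_VBfrac)
  then show "Q (insert w A) b \<in> VBfrac" "fplus (Q {w} b) (Q A b) \<in> VBfrac"
    using fplus_props(1) by auto
  fix u :: "real^'a" assume u: "pos u"
  have "vl (fplus (Q {w} b) (Q A b)) u = min (vl (Q {w} b) u) (vl (Q A b) u)"
    using fplus_props(2)[OF Qs(2,3) u] .
  also have "\<dots> = min (HE {w} u - HE b u) (HE A u - HE b u)"
    using vl_Q[OF _ f(2,3) u, of "{w}"] vl_Q[OF f(1) f(2,3) u] by (simp add: fv_def)
  also have "\<dots> = min (HE {w} u) (HE A u) - HE b u"
    using HE_finite[OF f(3)] ereal_min_minus by metis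
  also have "\<dots> = HE (insert w A) u - HE b u"
    using HE_union[of "{w}" A u] f by simp
  also have "\<dots> = vl (Q (insert w A) b) u" using vl_Q[OF _ f(2,3) u, of "insert w A"] f(1) by (simp add: fv_def)
  finally show "vl (Q (insert w A) b) u = vl (fplus (Q {w} b) (Q A b)) u" by simp
qed

lemma Q_self: assumes f: "finite b" "b \<noteq> {}" shows "Q b b = fone"
proof (rule vl_ext)
  show "Q b b \<in> VBfrac" using f by (auto intro!: Q_VBfrac)
  show "fone \<in> VBfrac" by (rule fone_props)
  fix u :: "real^'a" assume u: "pos u"
  have "vl (Q b b) u = HE b u - HE b u" using vl_Q[OF f(1) f u] by (simp add: fv_def)
  also have "\<dots> = 0" using HE_finite[OF f(2)] by simp
  finally show "vl (Q b b) u = vl fone u" using fone_props(2)[OF u] by simp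
qed



lemma inner_shift: "inner (u + e *\<^sub>R axis i 1) (emb p) = inner u (emb p) + e * real (p i)"
  by (simp add: inner_add_left inner_axis' emb_def)

lemma H_shift:
  assumes f: "finite S" "S \<noteq> {}" and e: "0 \<le> e"
  shows "H S u \<le> H S (u + e *\<^sub>R axis i 1)"
    "H S (u + e *\<^sub>R axis i 1) \<le> H S u + e * (\<Sum>p\<in>S. real (p i))"
proof -
  obtain p0 where p0: "p0 \<in> S" "H S (u + e *\<^sub>R axis i 1) = inner (u + e *\<^sub>R axis i 1) (emb p0)"
    using H_attained f by blast
  have "H S u \<le> inner u (emb p0)" using H_le f p0 by blast
  also have "\<dots> \<le> inner (u + e *\<^sub>R axis i 1) (emb p0)" using e by (simp add: inner_shift)
  finally show "H S u \<le> H S (u + e *\<^sub>R axis i 1)" using p0 by simp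
  obtain p1 where p1: "p1 \<in> S" "H S u = inner u (emb p1)"
    using H_attained f by blast
  have "H S (u + e *\<^sub>R axis i 1) \<le> inner (u + e *\<^sub>R axis i 1) (emb p1)" using H_le f p1 by blast
  also have "\<dots> = H S u + e * real (p1 i)" using p1 by (simp add: inner_shift)
  also have "real (p1 i) \<le> (\<Sum>p\<in>S. real (p i))" using p1 f by (intro member_le_sum) auto
  then have "e * real (p1 i) \<le> e * (\<Sum>p\<in>S. real (p i))" using e by (intro mult_left_mono)
  finally show "H S (u + e *\<^sub>R axis i 1) \<le> H S u + e * (\<Sum>p\<in>S. real (p i))" by simp
qed

lemma eq_by_shift:
  assumes c: "finite c" "c \<noteq> {}" and d: "finite d" "d \<noteq> {}"
    and h: "\<And>e. e > 0 \<Longrightarrow> H c (u + e *\<^sub>R axis i 1) = H d (u + e *\<^sub>R axis i 1)"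
  shows "H c u = H d u"
proof (rule ccontr)
  assume ne: "H c u \<noteq> H d u"
  define Kc where "Kc = (\<Sum>p\<in>c. real (p i))"
  define Kd where "Kd = (\<Sum>p\<in>d. real (p i))"
  have Kc: "0 \<le> Kc" unfolding Kc_def by (intro sum_nonneg) auto
  have Kd: "0 \<le> Kd" unfolding Kd_def by (intro sum_nonneg) auto
  define D where "D = \<bar>H c u - H d u\<bar>"
  have Dpos: "D > 0" using ne unfolding D_def by simp
  define K where "K = Kc + Kd + 1"
  have Kpos: "K > 0" using Kc Kd unfolding K_def by simp
  define e where "e = D / (2 * K)"
  have epos: "e > 0" unfolding e_def using Dpos Kpos by simp
  have eK: "e * K = D / 2" unfolding e_def using Kpos by simp
  note sc = H_shift[OF c less_imp_le[OF epos], of u i] and sd = H_shift[OF d less_imp_le[OF epos], of u i]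
  have hh: "H c (u + e *\<^sub>R axis i 1) = H d (u + e *\<^sub>R axis i 1)" using h epos by blast
  have "e * Kc \<le> e * K" "e * Kd \<le> e * K" using epos Kc Kd unfolding K_def by (auto intro!: mult_left_mono)
  then have "D \<le> e * K" using sc sd hh unfolding D_def Kc_def[symmetric] Kd_def[symmetric] by linarith
  then show False using eK Dpos by linarith
qed

lemma ereal_min_zero: "min (a::ereal) b = 0 \<Longrightarrow> 0 < b \<Longrightarrow> a = 0"
  by (auto simp: min_def split: if_splits)

type_synonym 'n frac = "('n pt set \<times> 'n pt set) set"

lemma min3: "min a c \<le> z1 \<Longrightarrow> min b c \<le> z2 \<Longrightarrow> min (min a b) c \<le> min z1 (z2::'a::linorder)"
  by (auto simp: min_def split: if_splits)

definition LTI :: "('n::finite pt set \<times> 'n pt set) set set \<Rightarrow> 'n pt \<Rightarrow> 'n pt \<Rightarrow> bool" where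
  "LTI I p q \<longleftrightarrow> p \<noteq> q \<and> Q {p} {p, q} \<notin> I"

locale mx =
  fixes I :: "('n::finite pt set \<times> 'n pt set) set set"
  assumes max: "maximal_circ_k_ideal I"
begin

lemma M1: "circ_k_ideal I" "I \<noteq> Circ" "\<forall>J. circ_k_ideal J \<and> J \<noteq> Circ \<and> I \<subseteq> J \<longrightarrow> J = I"
  using max unfolding maximal_circ_k_ideal_def by blast+

lemma M2: "circ_ideal I" "\<forall>a\<in>I. \<forall>b\<in>Circ. fplus a b \<in> I \<longrightarrow> b \<in> I"
  using M1(1) unfolding circ_k_ideal_def by blast+

lemma M3: "I \<subseteq> Circ" "fzero \<in> I" "\<forall>x\<in>I. \<forall>y\<in>I. fplus x y \<in> I"
  using M2(1) unfolding circ_ideal_def by blast+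

lemma sub: "I \<subseteq> Circ" using M3 by blast
lemma zero: "fzero \<in> I" using M3 by blast
lemma plus: "x \<in> I \<Longrightarrow> y \<in> I \<Longrightarrow> fplus x y \<in> I" using M3 by blast
lemma kprop: "a \<in> I \<Longrightarrow> b \<in> Circ \<Longrightarrow> fplus a b \<in> I \<Longrightarrow> b \<in> I" using M2 by blast
lemma neq: "I \<noteq> Circ" using M1 by blast
lemma maxl: "circ_k_ideal J \<Longrightarrow> J \<noteq> Circ \<Longrightarrow> I \<subseteq> J \<Longrightarrow> J = I" using M1(3) by blast

lemma down: assumes x: "x \<in> I" and y: "y \<in> Circ" and le: "\<And>u. pos u \<Longrightarrow> vl x u \<le> vl y u"
  shows "y \<in> I"
proof -
  have xv: "x \<in> VBfrac" using x sub Circ_VBfrac by blast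
  have yv: "y \<in> VBfrac" using y Circ_VBfrac by blast
  have "fplus x y = x"
    by (rule vl_ext) (use xv yv le in \<open>auto simp: fplus_props min_absorb1\<close>)
  then show ?thesis using kprop[OF x y] x by simp
qed

lemma one_notin: "fone \<notin> I"
proof
  assume o: "fone \<in> I"
  have "Circ \<subseteq> I"
  proof
    fix y :: "'n frac" assume y: "y \<in> Circ"
    show "y \<in> I" by (rule down[OF o y]) (simp add: fone_props Circ_nonneg[OF y])
  qed
  then show False using sub neq by blast
qed

lemma gen: assumes x: "x \<in> Circ" "x \<notin> I"
  shows "\<exists>i\<in>I. \<forall>u. pos u \<longrightarrow> min (vl i u) (vl x u) = 0"
proof -
  define J where "J = {z \<in> Circ. \<exists>i\<in>I. \<forall>u. pos u \<longrightarrow> min (vl i u) (vl x u) \<le> vl z u}"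
  have IJ: "I \<subseteq> J"
  proof
    fix z assume z: "z \<in> I"
    have "\<forall>u. pos u \<longrightarrow> min (vl z u) (vl x u) \<le> vl z u" by simp
    then show "z \<in> J" unfolding J_def using sub z by blast
  qed
  have xJ: "x \<in> J" unfolding J_def using x zero by auto
  have Jk: "circ_k_ideal J"
    unfolding circ_k_ideal_def circ_ideal_def
  proof (intro conjI ballI impI)
    show "J \<subseteq> Circ" unfolding J_def by auto
    show "fzero \<in> J" using IJ zero by auto
  next
    fix z1 z2 :: "'n frac" assume z1: "z1 \<in> J" and z2: "z2 \<in> J"
    obtain i1 where i1: "i1 \<in> I" "\<forall>u. pos u \<longrightarrow> min (vl i1 u) (vl x u) \<le> vl z1 u" using z1 unfolding J_def by auto
    obtain i2 where i2: "i2 \<in> I" "\<forall>u. pos u \<longrightarrow> min (vl i2 u) (vl x u) \<le> vl z2 u" using z2 unfolding J_def by auto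
    have C: "z1 \<in> Circ" "z2 \<in> Circ" "i1 \<in> Circ" "i2 \<in> Circ" using z1 z2 i1 i2 sub unfolding J_def by auto
    have "fplus i1 i2 \<in> I" using plus i1 i2 by blast
    moreover have "\<forall>u. pos u \<longrightarrow> min (vl (fplus i1 i2) u) (vl x u) \<le> vl (fplus z1 z2) u"
    proof (intro allI impI)
      fix u :: "real^'n" assume u: "pos u"
      have "vl (fplus i1 i2) u = min (vl i1 u) (vl i2 u)" using fplus_props(2)[OF Circ_VBfrac[OF C(3)] Circ_VBfrac[OF C(4)] u] .
      moreover have "vl (fplus z1 z2) u = min (vl z1 u) (vl z2 u)" using fplus_props(2)[OF Circ_VBfrac[OF C(1)] Circ_VBfrac[OF C(2)] u] .
      ultimately show "min (vl (fplus i1 i2) u) (vl x u) \<le> vl (fplus z1 z2) u"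
        using i1(2) i2(2) u min3 by metis
    qed
    ultimately show "fplus z1 z2 \<in> J" unfolding J_def using fplus_Circ C by blast
  next
    fix r z :: "'n frac" assume r: "r \<in> Circ" and z: "z \<in> J"
    obtain i where i: "i \<in> I" "\<forall>u. pos u \<longrightarrow> min (vl i u) (vl x u) \<le> vl z u" using z unfolding J_def by auto
    have C: "z \<in> Circ" using z unfolding J_def by auto
    have "vl z u \<le> vl (fmult r z) u" "vl z u \<le> vl (fmult z r) u" if u: "pos u" for u
      using Circ_nonneg[OF r u] Circ_VBfrac[OF r] Circ_VBfrac[OF C] u
      by (auto simp: fmult_props add_increasing add_increasing2)
    then have "\<forall>u. pos u \<longrightarrow> min (vl i u) (vl x u) \<le> vl (fmult r z) u"
      "\<forall>u. pos u \<longrightarrow> min (vl i u) (vl x u) \<le> vl (fmult z r) u"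
      using i(2) by (meson order_trans)+
    then show "fmult r z \<in> J" "fmult z r \<in> J" unfolding J_def using i(1) fmult_Circ r C
      by blast+
  next
    fix a b :: "'n frac" assume a: "a \<in> J" and b: "b \<in> Circ" and ab: "fplus a b \<in> J"
    obtain i where i: "i \<in> I" "\<forall>u. pos u \<longrightarrow> min (vl i u) (vl x u) \<le> vl (fplus a b) u" using ab unfolding J_def by auto
    have C: "a \<in> Circ" using a unfolding J_def by auto
    have "vl (fplus a b) u \<le> vl b u" if u: "pos u" for u
      using Circ_VBfrac[OF b] Circ_VBfrac[OF C] u by (auto simp: fplus_props)
    then have "\<forall>u. pos u \<longrightarrow> min (vl i u) (vl x u) \<le> vl b u"
      using i(2) by (meson order_trans)
    then show "b \<in> J" unfolding J_def using i(1) b by blast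
  qed
  have "J \<noteq> I" using xJ x by blast
  then have "J = Circ" using maxl[OF Jk _ IJ] by blast
  then have "fone \<in> J" using fone_Circ by simp
  then obtain i where i: "i \<in> I" "\<forall>u. pos u \<longrightarrow> min (vl i u) (vl x u) \<le> vl fone u" unfolding J_def by auto
  have "\<forall>u. pos u \<longrightarrow> min (vl i u) (vl x u) = 0"
  proof (intro allI impI)
    fix u :: "real^'n" assume u: "pos u"
    have "0 \<le> vl i u" "0 \<le> vl x u" using Circ_nonneg sub i x u by auto
    moreover have "min (vl i u) (vl x u) \<le> 0" using i(2) u fone_props(2)[OF u] by metis
    ultimately show "min (vl i u) (vl x u) = 0" by (metis antisym min.boundedI)
  qed
  then show ?thesis using i by blast
qed

end



lemma emb_zero: "emb (\<lambda>i. 0) = 0"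
  unfolding emb_def by (simp add: vec_eq_iff)

lemma pair_fin: "finite {p, q}" "{p, q} \<noteq> {}" by auto

context mx
begin

lemma Qpair_Circ: "Q {p} {p, q} \<in> Circ"
  by (rule Qs_Circ) (auto simp: H_pair)

lemma AS: assumes pq: "p \<noteq> q" shows "Q {p} {p, q} \<in> I \<or> Q {q} {p, q} \<in> I"
proof (rule ccontr)
  assume "\<not> ?thesis"
  then have nx: "Q {p} {p, q} \<notin> I" and ny: "Q {q} {p, q} \<notin> I" by auto
  have cy: "Q {q} {p, q} \<in> Circ" using Qpair_Circ[of q p] by (simp add: insert_commute)
  obtain i where i: "i \<in> I" "\<forall>u. pos u \<longrightarrow> min (vl i u) (vl (Q {p} {p, q}) u) = 0"
    using gen[OF Qpair_Circ nx] by blast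
  obtain j where j: "j \<in> I" "\<forall>u. pos u \<longrightarrow> min (vl j u) (vl (Q {q} {p, q}) u) = 0"
    using gen[OF cy ny] by blast
  define k where "k = fplus i j"
  have kI: "k \<in> I" unfolding k_def using plus i j by blast
  have iC: "i \<in> Circ" "j \<in> Circ" using i j sub by auto
  have kV: "k \<in> VBfrac" using kI sub Circ_VBfrac by blast
  have vk: "vl k u = min (vl i u) (vl j u)" if u: "pos u" for u
    unfolding k_def using fplus_props(2)[OF Circ_VBfrac[OF iC(1)] Circ_VBfrac[OF iC(2)] u] .
  have Z: "vl k u = 0" if u: "pos u" and ne: "inner u (emb p) \<noteq> inner u (emb q)" for u
  proof -
    have vx: "vl (Q {p} {p, q}) u = ereal (inner u (emb p) - min (inner u (emb p)) (inner u (emb q)))"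
      using vl_Qs[OF pair_fin u] by (simp add: H_pair)
    have vy: "vl (Q {q} {p, q}) u = ereal (inner u (emb q) - min (inner u (emb p)) (inner u (emb q)))"
      using vl_Qs[OF pair_fin u] by (simp add: H_pair)
    have i0: "0 \<le> vl i u" "0 \<le> vl j u" using Circ_nonneg iC u by auto
    show ?thesis
    proof (cases "inner u (emb p) > inner u (emb q)")
      case True
      then have "0 < vl (Q {p} {p, q}) u" using vx by simp
      then have "vl i u = 0" using i(2) u ereal_min_zero by blast
      then show ?thesis using vk[OF u] i0 by (simp add: min_def)
    next
      case False
      then have "inner u (emb q) > inner u (emb p)" using ne by simp
      then have "0 < vl (Q {q} {p, q}) u" using vy by simp
      then have "vl j u = 0" using j(2) u ereal_min_zero by blast
      then show ?thesis using vk[OF u] i0 by (simp add: min_def)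
    qed
  qed
  obtain c d where cd: "(c, d) \<in> k" using VBfrac_ne[OF kV] by auto
  note cdQ = VBfrac_Q[OF kV cd]
  have vkcd: "vl k u = HE c u - HE d u" if u: "pos u" for u
    using vl_rep[OF kV cd u] by (simp add: fv_def)
  obtain i0 where i0: "p i0 \<noteq> q i0" using pq by auto
  define sh where "sh u e = u + e *\<^sub>R axis i0 (1::real)" for u :: "real^'n" and e :: real
  have sh_pos: "pos (sh u e)" if "pos u" "0 \<le> e" for u e
    using that unfolding sh_def pos_def by (auto simp: axis_def)
  have sh_ne: "inner (sh u e) (emb p) \<noteq> inner (sh u e) (emb q)"
    if "inner u (emb p) = inner u (emb q)" "0 < e" for u e
    using that i0 unfolding sh_def by (simp add: inner_shift)
  have dne: "d \<noteq> {}" using cdQ by simp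
  have cne: "c \<noteq> {}"
  proof
    assume "c = {}"
    obtain u :: "real^'n" where u: "pos u" "inner u (emb p) \<noteq> inner u (emb q)"
    proof (cases "inner 0 (emb p) = inner (0::real^'n) (emb q)")
      case True
      then show ?thesis using that[of "sh 0 1"] sh_pos[of 0 1] sh_ne[of 0 1] by (simp add: pos_def)
    next
      case False then show ?thesis using that[of 0] by (simp add: pos_def)
    qed
    have "vl k u = \<infinity>" using vkcd[OF u(1)] \<open>c = {}\<close> HE_finite[OF dne] by (simp add: HE_def)
    then show False using Z[OF u] by simp
  qed
  have all0: "vl k u = 0" if u: "pos u" for u
  proof (cases "inner u (emb p) = inner u (emb q)")
    case False then show ?thesis using Z u by blast
  next
    case True
    have "H c u = H d u"
    proof (rule eq_by_shift[OF cdQ(2) cne cdQ(3) dne])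
      fix e :: real assume e: "0 < e"
      have "vl k (sh u e) = 0" using Z[OF sh_pos[OF u less_imp_le[OF e]] sh_ne[OF True e]] .
      then have "ereal (H c (sh u e)) - ereal (H d (sh u e)) = 0"
        using vkcd[OF sh_pos[OF u less_imp_le[OF e]]] HE_finite[OF cne] HE_finite[OF dne] by simp
      then show "H c (u + e *\<^sub>R axis i0 1) = H d (u + e *\<^sub>R axis i0 1)" unfolding sh_def by simp
    qed
    then show ?thesis using vkcd[OF u] HE_finite[OF cne] HE_finite[OF dne] by simp
  qed
  have "k = fone" by (rule vl_ext[OF kV fone_props(1)]) (simp add: all0 fone_props(2))
  then show False using kI one_notin by simp
qed

lemma Total: "Q {p} {p, q} \<notin> I \<or> Q {q} {p, q} \<notin> I"
proof -
  have "fplus (Q {p} {p, q}) (Q {q} {p, q}) = Q {p, q} {p, q}"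
    using Q_insert[of "{q}" "{p, q}" p] by simp
  also have "\<dots> = fone" by (rule Q_self) auto
  finally show ?thesis using plus one_notin by metis
qed

lemma ULem: assumes A: "finite A" and b: "finite b" "b \<noteq> {}" and all: "\<forall>w\<in>A. Q {w} b \<in> I"
  shows "Q A b \<in> I"
  using A all
proof (induction A rule: finite_induct)
  case empty then show ?case using Q_empty[OF b] zero by simp
next
  case (insert w A)
  then show ?case using Q_insert[OF insert(1) b] plus by simp
qed

lemma EX_top: assumes b: "finite b" "b \<noteq> {}" shows "\<exists>w\<in>b. Q {w} b \<notin> I"
proof (rule ccontr)
  assume "\<not> ?thesis"
  then have "Q b b \<in> I" using ULem[OF b(1) b] by blast
  then show False using Q_self[OF b] one_notin by simp
qed

lemma Qmono: assumes b: "finite b" "b \<noteq> {}" and b': "finite b'" "b' \<noteq> {}"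
  and hb: "\<And>u. pos u \<Longrightarrow> H b u \<le> H b' u" and hw: "\<And>u. pos u \<Longrightarrow> H b u \<le> inner u (emb w)"
  and inI: "Q {w} b' \<in> I"
  shows "Q {w} b \<in> I"
proof (rule down[OF inI])
  show "Q {w} b \<in> Circ" using Qs_Circ[OF b hw] by blast
  fix u :: "real^'n" assume u: "pos u"
  show "vl (Q {w} b') u \<le> vl (Q {w} b) u"
    using vl_Qs[OF b' u] vl_Qs[OF b u] hb[OF u] by simp
qed

lemma LT_irrefl: "\<not> LTI I a a" unfolding LTI_def by simp

lemma LT_total: "a \<noteq> b \<Longrightarrow> LTI I a b \<or> LTI I b a"
  unfolding LTI_def using Total[of a b] by (auto simp: insert_commute)

lemma LT_trans: assumes pq: "LTI I p q" and qr: "LTI I q r" shows "LTI I p r"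
proof -
  have np: "Q {p} {p, q} \<notin> I" "p \<noteq> q" using pq unfolding LTI_def by auto
  have nq: "Q {q} {q, r} \<notin> I" "q \<noteq> r" using qr unfolding LTI_def by auto
  have pr: "p \<noteq> r"
  proof
    assume "p = r"
    then have "Q {q} {p, q} \<notin> I" using nq by (simp add: insert_commute)
    then show False using AS[OF np(2)] np(1) by blast
  qed
  define b where "b = {p, q, r}"
  have bf: "finite b" "b \<noteq> {}" unfolding b_def by auto
  have Hb: "H b u \<le> H b' u" if "b' \<subseteq> b" "b' \<noteq> {}" for b' u using H_anti[OF bf(1) that] .
  have Hw: "H b u \<le> inner u (emb w)" if "w \<in> b" for w u using H_le[OF bf(1) that] .
  obtain w where w: "w \<in> b" "Q {w} b \<notin> I" using EX_top[OF bf] by blast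
  have "w \<noteq> q"
  proof
    assume "w = q"
    have hI: "Q {q} {p, q} \<in> I" using AS[OF np(2)] np(1) by blast
    have "Q {q} b \<in> I" by (rule Qmono[OF bf pair_fin _ _ hI]) (use Hb[of "{p, q}"] Hw[of q] in \<open>auto simp: b_def\<close>)
    then show False using w \<open>w = q\<close> by simp
  qed
  moreover have "w \<noteq> r"
  proof
    assume "w = r"
    have hI: "Q {r} {q, r} \<in> I" using AS[OF nq(2)] nq(1) by blast
    have "Q {r} b \<in> I" by (rule Qmono[OF bf pair_fin _ _ hI]) (use Hb[of "{q, r}"] Hw[of r] in \<open>auto simp: b_def\<close>)
    then show False using w \<open>w = r\<close> by simp
  qed
  ultimately have "w = p" using w unfolding b_def by auto
  have "Q {p} {p, r} \<notin> I"
  proof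
    assume hI: "Q {p} {p, r} \<in> I"
    have "Q {p} b \<in> I" by (rule Qmono[OF bf pair_fin _ _ hI]) (use Hb[of "{p, r}"] Hw[of p] in \<open>auto simp: b_def\<close>)
    then show False using w \<open>w = p\<close> by simp
  qed
  then show ?thesis unfolding LTI_def using pr by simp
qed

lemma LT_zero: assumes "a \<noteq> (\<lambda>i. 0)" shows "LTI I (\<lambda>i. 0) a"
proof -
  have "Q {\<lambda>i. 0} {\<lambda>i. 0, a} = fone"
  proof (rule vl_ext)
    show "Q {\<lambda>i. 0} {\<lambda>i. 0, a} \<in> VBfrac" by (rule Q_VBfrac) auto
    show "fone \<in> VBfrac" by (rule fone_props)
    fix u :: "real^'n" assume u: "pos u"
    have "0 \<le> inner u (emb a)" using inner_pos[OF u pos_emb] .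
    then show "vl (Q {\<lambda>i. 0} {\<lambda>i. 0, a}) u = vl fone u"
      using vl_Qs[OF pair_fin u] fone_props(2)[OF u] by (simp add: H_pair emb_zero)
  qed
  then show ?thesis unfolding LTI_def using assms one_notin by auto
qed

lemma LT_padd: assumes "LTI I a b" shows "LTI I (padd a c) (padd b c)"
proof -
  have ne: "a \<noteq> b" and nI: "Q {a} {a, b} \<notin> I" using assms unfolding LTI_def by auto
  have "padd a c \<noteq> padd b c"
  proof
    assume "padd a c = padd b c"
    then have "a = b" unfolding padd_def by (auto simp: fun_eq_iff dest: fun_cong)
    then show False using ne by simp
  qed
  moreover have "Q {padd a c} {padd a c, padd b c} = Q {a} {a, b}"
  proof (rule vl_ext)
    show "Q {padd a c} {padd a c, padd b c} \<in> VBfrac" "Q {a} {a, b} \<in> VBfrac" by (auto intro!: Q_VBfrac)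
    fix u :: "real^'n" assume u: "pos u"
    show "vl (Q {padd a c} {padd a c, padd b c}) u = vl (Q {a} {a, b}) u"
      using vl_Qs[OF pair_fin u] by (simp add: H_pair emb_padd inner_add_right min_def)
  qed
  ultimately show ?thesis unfolding LTI_def using nI by simp
qed

lemma LT_mono: "monomial_order (LTI I)"
  unfolding monomial_order_def using LT_irrefl LT_total LT_trans LT_zero LT_padd by blast

end



lemma min_ord_ex:
  assumes tr: "\<forall>a b c. lt a b \<longrightarrow> lt b c \<longrightarrow> lt a c" and tot: "\<forall>a b. a \<noteq> b \<longrightarrow> lt a b \<or> lt b a"
    and f: "finite b" "b \<noteq> {}"
  shows "\<exists>x. x \<in> b \<and> (\<forall>y\<in>b. y \<noteq> x \<longrightarrow> lt x y)"
  using f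
proof (induction b rule: finite_ne_induct)
  case (singleton x) then show ?case by auto
next
  case (insert x F)
  then obtain m where m: "m \<in> F" "\<forall>y\<in>F. y \<noteq> m \<longrightarrow> lt m y" by blast
  show ?case
  proof (cases "lt x m")
    case True
    have "\<forall>y\<in>insert x F. y \<noteq> x \<longrightarrow> lt x y"
    proof (intro ballI impI)
      fix y assume y: "y \<in> insert x F" "y \<noteq> x"
      then have "y \<in> F" by simp
      show "lt x y"
      proof (cases "y = m")
        case True then show ?thesis using \<open>lt x m\<close> by simp
      next
        case False
        then have "lt m y" using m \<open>y \<in> F\<close> by blast
        then show ?thesis using \<open>lt x m\<close> tr by metis
      qed
    qed
    then show ?thesis by blast
  next
    case False
    have "x \<noteq> m" using insert m by blast
    then have "lt m x" using tot False by blast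
    then show ?thesis using m by (intro exI[of _ m]) auto
  qed
qed

lemma min_ord_prop:
  assumes mo: "monomial_order lt" and f: "finite b" "b \<noteq> {}"
  shows "min_ord lt b \<in> b" "\<And>y. y \<in> b \<Longrightarrow> y \<noteq> min_ord lt b \<Longrightarrow> lt (min_ord lt b) y"
proof -
  note mo' = mo[unfolded monomial_order_def]
  have irr: "\<forall>a. \<not> lt a a" using conjunct1[OF mo'] .
  have tr: "\<forall>a b c. lt a b \<longrightarrow> lt b c \<longrightarrow> lt a c" using conjunct1[OF conjunct2[OF mo']] .
  have tot: "\<forall>a b. a \<noteq> b \<longrightarrow> lt a b \<or> lt b a" using conjunct1[OF conjunct2[OF conjunct2[OF mo']]] .
  obtain x where x: "x \<in> b" "\<forall>y\<in>b. y \<noteq> x \<longrightarrow> lt x y" using min_ord_ex[OF tr tot f] by blast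
  have uniq: "z = x" if z: "z \<in> b" "\<forall>y\<in>b. y \<noteq> z \<longrightarrow> lt z y" for z
  proof (rule ccontr)
    assume "z \<noteq> x"
    then have "lt z x" "lt x z" using z x by auto
    then have "lt z z" using tr by metis
    then show False using irr by metis
  qed
  have "min_ord lt b = x" unfolding min_ord_def
  proof (rule the_equality)
    show "x \<in> b \<and> (\<forall>y\<in>b. y \<noteq> x \<longrightarrow> lt x y)" using x by blast
    fix z assume "z \<in> b \<and> (\<forall>y\<in>b. y \<noteq> z \<longrightarrow> lt z y)"
    then show "z = x" using uniq by blast
  qed
  then show "min_ord lt b \<in> b" "\<And>y. y \<in> b \<Longrightarrow> y \<noteq> min_ord lt b \<Longrightarrow> lt (min_ord lt b) y"
    using x by auto
qed

context mx
begin

lemma char: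
  assumes XC: "X \<in> Circ" and ab: "(a, b) \<in> X"
  shows "X \<in> I \<longleftrightarrow> min_ord (LTI I) b \<notin> a"
proof -
  have XV: "X \<in> VBfrac" using XC Circ_VBfrac by blast
  note Qab = VBfrac_Q[OF XV ab]
  have fa: "finite a" and fb: "finite b" "b \<noteq> {}" using Qab by auto
  have Hab: "ereal (H b u) \<le> HE a u" if u: "pos u" for u
  proof -
    have "0 \<le> vl X u" using Circ_nonneg[OF XC u] .
    also have "vl X u = HE a u - ereal (H b u)" using vl_rep[OF XV ab u] HE_finite[OF fb(2)] by (simp add: fv_def)
    finally show ?thesis by (cases "HE a u") auto
  qed
  have Hw: "H b u \<le> inner u (emb w)" if w: "w \<in> a" and u: "pos u" for w u
  proof -
    have "a \<noteq> {}" using w by auto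
    then have "HE a u = ereal (H a u)" by (rule HE_finite)
    moreover have "H a u \<le> inner u (emb w)" using H_le[OF fa w] .
    ultimately show ?thesis using Hab[OF u] by simp
  qed
  define v where "v = min_ord (LTI I) b"
  have v: "v \<in> b" "\<And>y. y \<in> b \<Longrightarrow> y \<noteq> v \<Longrightarrow> LTI I v y"
    using min_ord_prop[OF LT_mono fb] unfolding v_def by auto
  have Hv: "H b u \<le> inner u (emb v)" for u using H_le[OF fb(1) v(1)] .
  have pairsub: "H b u \<le> H {x, y} u" if "x \<in> b" "y \<in> b" for x y u
    using H_anti[OF fb(1)] that by simp
  have s1: "Q {v} b \<notin> I"
  proof -
    obtain w where w: "w \<in> b" "Q {w} b \<notin> I" using EX_top[OF fb] by blast
    have "w = v"
    proof (rule ccontr)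
      assume wv: "w \<noteq> v"
      then have "Q {v} {v, w} \<notin> I" using v(2)[OF w(1)] unfolding LTI_def by auto
      then have hI: "Q {w} {v, w} \<in> I" using AS[of v w] wv by auto
      have "Q {w} b \<in> I"
        by (rule Qmono[OF fb pair_fin _ _ hI]) (use pairsub[OF v(1) w(1)] H_le[OF fb(1) w(1)] in auto)
      then show False using w by simp
    qed
    then show ?thesis using w by simp
  qed
  show ?thesis
  proof
    assume XI: "X \<in> I"
    show "min_ord (LTI I) b \<notin> a"
    proof
      assume "min_ord (LTI I) b \<in> a"
      then have va: "v \<in> a" unfolding v_def .
      have "Q {v} b \<in> I"
      proof (rule down[OF XI])
        show "Q {v} b \<in> Circ" by (rule Qs_Circ[OF fb Hv])
        fix u :: "real^'n" assume u: "pos u"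
        have "HE a u \<le> ereal (inner u (emb v))"
        proof -
          have ane: "a \<noteq> {}" using va by auto
          have "HE a u = ereal (H a u)" using HE_finite[OF ane] .
          moreover have "H a u \<le> inner u (emb v)" using H_le[OF fa va] .
          ultimately show ?thesis by simp
        qed
        then have "HE a u - ereal (H b u) \<le> ereal (inner u (emb v)) - ereal (H b u)"
          by (rule ereal_minus_mono) simp
        then show "vl X u \<le> vl (Q {v} b) u"
          using vl_rep[OF XV ab u] vl_Qs[OF fb u] HE_finite[OF fb(2)] by (simp add: fv_def)
      qed
      then show False using s1 by simp
    qed
  next
    assume "min_ord (LTI I) b \<notin> a"
    then have va: "v \<notin> a" unfolding v_def .
    have "\<forall>w\<in>a. Q {w} b \<in> I"
    proof
      fix w assume wa: "w \<in> a"
      have wv: "w \<noteq> v" using wa va by auto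
      show "Q {w} b \<in> I"
      proof (rule ccontr)
        assume nw: "Q {w} b \<notin> I"
        have H2: "H b u \<le> H {w, v} u" if u: "pos u" for u
          using Hw[OF wa u] Hv[of u] by (simp add: H_pair)
        have c1: "Q {w} {w, v} \<notin> I"
        proof
          assume hI: "Q {w} {w, v} \<in> I"
          have "Q {w} b \<in> I" by (rule Qmono[OF fb pair_fin _ _ hI]) (use H2 Hw[OF wa] in auto)
          then show False using nw by simp
        qed
        have c2: "Q {v} {w, v} \<notin> I"
        proof
          assume hI: "Q {v} {w, v} \<in> I"
          have "Q {v} b \<in> I" by (rule Qmono[OF fb pair_fin _ _ hI]) (use H2 Hv in auto)
          then show False using s1 by simp
        qed
        show False using AS[OF wv] c1 c2 by simp
      qed
    qed
    then have "Q a b \<in> I" using ULem[OF fa fb] by blast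
    then show "X \<in> I" using Qab by simp
  qed
qed

lemma main: "I = m_dagger (LTI I)"
proof
  show "I \<subseteq> m_dagger (LTI I)"
  proof
    fix X assume XI: "X \<in> I"
    then have XC: "X \<in> Circ" using sub by blast
    obtain a b where ab: "(a, b) \<in> X" using VBfrac_ne[OF Circ_VBfrac[OF XC]] by auto
    then show "X \<in> m_dagger (LTI I)" unfolding m_dagger_def using char[OF XC ab] XI XC by blast
  qed
next
  show "m_dagger (LTI I) \<subseteq> I"
  proof
    fix X assume "X \<in> m_dagger (LTI I)"
    then obtain a b where XC: "X \<in> Circ" and ab: "(a, b) \<in> X" and m: "min_ord (LTI I) b \<notin> a"
      unfolding m_dagger_def by blast
    show "X \<in> I" using char[OF XC ab] m by blast
  qed
qed

end

theorem corollary4p12: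
  fixes I :: "('n::finite pt set \<times> 'n pt set) set set"
  assumes "maximal_circ_k_ideal I"
  shows "\<exists>lt. monomial_order lt \<and> I = m_dagger lt"
proof -
  interpret mx I by (rule mx.intro) (rule assms)
  show ?thesis using LT_mono main by blast
qed


end
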